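(* Let $n,k$ be integers with $1\leq k\leq n-1$. Let $a\in\mathbb{Z}^n$ and $\alpha\in\mathbb{Z}$ be such that $ax\geq\alpha$ is a facet defining inequality of $Q(C_n^k)$ which is neither (a positive multiple of) a boolean facet nor (a positive multiple of) the rank constraint. Put $a^0=\min\{a_i:i\in\mathbb{Z}_n\}$ and $W=\{i\in\mathbb{Z}_n: a_i>a^0\}$, so that the inequality reads $\sum_{i\in W}a_ix_i+a^0\sum_{i\notin W}x_i\geq\alpha$. Then: 1. For every $i\in\mathbb{Z}_n$ there exist (a) a root $\tilde x$ with $i\in\tilde x$, (b) a root $\tilde x$ with $i\notin\tilde x$, and (c) a root $\tilde x$ with $|\tilde x\cap C^i|=2$. 2. Let $i\in W$ and let $\tilde x$ be a root with $i\in\tilde x$. (a) If there exists $j\neq i$ with $j\in\tilde x\cap C^{i-k+1}$, then $[i,j+k]_n\subseteq W$. (b) If there exists $j\neq i$ with $j\in \tilde x\cap C^i$, then $[j-k,i]_n\subseteq W$.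
   Context: $\mathbb{Z}_n=\{0,\dots,n-1\}$ with addition modulo $n$; $(a,b)_n$, $[a,b)_n$, $(a,b]_n$, $[a,b]_n$ denote the $\mathbb{Z}_n$-cyclic intervals of points between $a$ and $b$ (open/closed at the respective ends). For $i\in\mathbb{Z}_n$, $C^i=[i,i+k)_n$, and the circulant matrix $C_n^k$ is the $n\times n$ $0,1$ matrix whose $i$-th row is the incidence vector of $C^i$. A cover of $C_n^k$ is a vector $x\in\{0,1\}^n$ with $C_n^kx\geq\mathbf 1$; vectors in $\{0,1\}^n$ are identified with the subsets of $\mathbb{Z}_n$ they are the characteristic vectors of. $Q(C_n^k)$ is the convex hull of the covers of $C_n^k$. The boolean facets are $x_i\geq0$, $x_i\leq 1$ and $\sum_{j\in C^i}x_j\geq 1$ ($i\in\mathbb{Z}_n$); the rank constraint is $\sum_{i\in\mathbb{Z}_n}x_i\geq\lceil n/k\rceil$. A root of an inequality $ax\geq\alpha$ is a cover $\tilde x$ of $C_n^k$ with $a\tilde x=\alpha$. *)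

theory Defs
  imports Complex_Main
begin

text \<open>Indices of Z_n are represented by the integers 0,...,n-1; vectors in R^n
  by functions int => real (only the values on 0..n-1 matter).\<close>

definition Zn :: "int \<Rightarrow> int set" where
  "Zn n = {0..<n}"

definition cint :: "int \<Rightarrow> int \<Rightarrow> int \<Rightarrow> int set" where
  "cint n a b = {(a + t) mod n | t. 0 \<le> t \<and> t \<le> (b - a) mod n}"

definition Cset :: "int \<Rightarrow> int \<Rightarrow> int \<Rightarrow> int set" where
  "Cset n k i = {(i + t) mod n | t. 0 \<le> t \<and> t < k}"

definition is_cover :: "int \<Rightarrow> int \<Rightarrow> int set \<Rightarrow> bool" where
  "is_cover n k S \<longleftrightarrow> S \<subseteq> Zn n \<and> (\<forall>i\<in>Zn n. Cset n k i \<inter> S \<noteq> {})"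

definition charvec :: "int set \<Rightarrow> int \<Rightarrow> real" where
  "charvec S = (\<lambda>i. if i \<in> S then 1 else 0)"

text \<open>Q(C_n^k): convex hull of the characteristic vectors of the covers
  (the set of covers is finite, so convex combinations of all covers suffice).\<close>
definition Qpoly :: "int \<Rightarrow> int \<Rightarrow> (int \<Rightarrow> real) set" where
  "Qpoly n k = {x. \<exists>\<mu>::int set \<Rightarrow> real.
      (\<forall>S. \<mu> S \<ge> 0) \<and> (\<Sum>S\<in>{S. is_cover n k S}. \<mu> S) = 1 \<and>
      x = (\<lambda>i. \<Sum>S\<in>{S. is_cover n k S}. \<mu> S * charvec S i)}"

definition lhs :: "int \<Rightarrow> (int \<Rightarrow> int) \<Rightarrow> (int \<Rightarrow> real) \<Rightarrow> real" where
  "lhs n a x = (\<Sum>i\<in>Zn n. real_of_int (a i) * x i)"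

definition aff_indep :: "int \<Rightarrow> (int \<Rightarrow> real) set \<Rightarrow> bool" where
  "aff_indep n T \<longleftrightarrow> finite T \<and>
     (\<forall>c::(int \<Rightarrow> real) \<Rightarrow> real.
        (\<forall>i\<in>Zn n. (\<Sum>v\<in>T. c v * v i) = 0) \<and> (\<Sum>v\<in>T. c v) = 0 \<longrightarrow> (\<forall>v\<in>T. c v = 0))"

definition adim :: "int \<Rightarrow> (int \<Rightarrow> real) set \<Rightarrow> int" where
  "adim n P = (if P = {} then -1
     else Max {int (card T) - 1 | T. T \<subseteq> P \<and> aff_indep n T})"

definition facet_defining :: "int \<Rightarrow> int \<Rightarrow> (int \<Rightarrow> int) \<Rightarrow> int \<Rightarrow> bool" where
  "facet_defining n k a \<alpha> \<longleftrightarrow>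
     (\<forall>x\<in>Qpoly n k. lhs n a x \<ge> real_of_int \<alpha>) \<and>
     (let F = {x\<in>Qpoly n k. lhs n a x = real_of_int \<alpha>}
      in F \<noteq> {} \<and> adim n F = adim n (Qpoly n k) - 1)"

definition boolean_or_rank :: "int \<Rightarrow> int \<Rightarrow> (int \<Rightarrow> int) \<Rightarrow> int \<Rightarrow> bool" where
  "boolean_or_rank n k a \<alpha> \<longleftrightarrow> (\<exists>t::real. t > 0 \<and>
     ((\<exists>i\<in>Zn n. (\<forall>j\<in>Zn n. real_of_int (a j) = t * (if j = i then 1 else 0)) \<and> real_of_int \<alpha> = 0)
    \<or> (\<exists>i\<in>Zn n. (\<forall>j\<in>Zn n. real_of_int (a j) = t * (if j = i then -1 else 0)) \<and> real_of_int \<alpha> = - t)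
    \<or> (\<exists>i\<in>Zn n. (\<forall>j\<in>Zn n. real_of_int (a j) = t * (if j \<in> Cset n k i then 1 else 0)) \<and> real_of_int \<alpha> = t)
    \<or> ((\<forall>j\<in>Zn n. real_of_int (a j) = t) \<and> real_of_int \<alpha> = t * real_of_int \<lceil>real_of_int n / real_of_int k\<rceil>)))"

definition is_root :: "int \<Rightarrow> int \<Rightarrow> (int \<Rightarrow> int) \<Rightarrow> int \<Rightarrow> int set \<Rightarrow> bool" where
  "is_root n k a \<alpha> S \<longleftrightarrow> is_cover n k S \<and> (\<Sum>j\<in>S. a j) = \<alpha>"

end

theory Submission
  imports Defs
begin

lemma core:
  fixes f :: "'v \<Rightarrow> 'i \<Rightarrow> real"
  assumes "finite I" "finite V" "card I < card V"
  shows "\<exists>c. (\<exists>v\<in>V. c v \<noteq> 0) \<and> (\<forall>i\<in>I. (\<Sum>v\<in>V. c v * f v i) = 0)"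
  using assms
proof (induction I arbitrary: V f rule: finite_induct)
  case empty
  then obtain v where v: "v \<in> V" by fastforce
  show ?case
    by (rule exI[of _ "\<lambda>w. if w = v then 1 else 0"]) (use v in auto)
next
  case (insert i0 I)
  show ?case
  proof (cases "\<forall>v\<in>V. f v i0 = 0")
    case True
    have "card I < card V" using insert by simp
    then obtain c where c: "\<exists>v\<in>V. c v \<noteq> 0" "\<forall>i\<in>I. (\<Sum>v\<in>V. c v * f v i) = 0"
      using insert.IH[of V f] insert.prems by blast
    show ?thesis using c True by (intro exI[of _ c]) auto
  next
    case False
    then obtain v0 where v0: "v0 \<in> V" "f v0 i0 \<noteq> 0" by blast
    define V' where "V' = V - {v0}"
    define g where "g = (\<lambda>v i. f v i - f v i0 / f v0 i0 * f v0 i)"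
    have cV': "card V' = card V - 1" using v0 insert.prems unfolding V'_def by simp
    have "card I < card V'" using cV' insert by simp
    moreover have fV': "finite V'" using insert.prems unfolding V'_def by simp
    ultimately obtain c' where c': "\<exists>v\<in>V'. c' v \<noteq> 0" "\<forall>i\<in>I. (\<Sum>v\<in>V'. c' v * g v i) = 0"
      using insert.IH[of V' g] by blast
    define \<sigma> where "\<sigma> = (\<Sum>w\<in>V'. c' w * f w i0)"
    define c where "c = (\<lambda>v. if v = v0 then - \<sigma> / f v0 i0 else c' v)"
    have split: "(\<Sum>v\<in>V. c v * f v i) = c v0 * f v0 i + (\<Sum>v\<in>V'. c' v * f v i)" for i
    proof -
      have "(\<Sum>v\<in>V. c v * f v i) = c v0 * f v0 i + (\<Sum>v\<in>V'. c v * f v i)"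
        unfolding V'_def using v0 insert.prems by (simp add: sum.remove)
      also have "(\<Sum>v\<in>V'. c v * f v i) = (\<Sum>v\<in>V'. c' v * f v i)"
        by (rule sum.cong) (auto simp: c_def V'_def)
      finally show ?thesis .
    qed
    have "\<forall>i\<in>insert i0 I. (\<Sum>v\<in>V. c v * f v i) = 0"
    proof
      fix i assume i: "i \<in> insert i0 I"
      show "(\<Sum>v\<in>V. c v * f v i) = 0"
      proof (cases "i = i0")
        case True
        then show ?thesis using split[of i0] v0(2) by (simp add: c_def \<sigma>_def)
      next
        case False
        then have iI: "i \<in> I" using i by simp
        have "(\<Sum>v\<in>V'. c' v * f v i) = (\<Sum>v\<in>V'. c' v * g v i + (c' v * f v i0) * (f v0 i / f v0 i0))"
          by (rule sum.cong) (auto simp: g_def algebra_simps)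
        also have "\<dots> = (\<Sum>v\<in>V'. c' v * g v i) + \<sigma> * (f v0 i / f v0 i0)"
          unfolding \<sigma>_def by (simp only: sum.distrib sum_distrib_right)
        also have "\<dots> = \<sigma> * (f v0 i / f v0 i0)" using c'(2) iI by simp
        finally show ?thesis using split[of i] by (simp add: c_def)
      qed
    qed
    moreover have "\<exists>v\<in>V. c v \<noteq> 0" using c'(1) unfolding c_def V'_def by auto
    ultimately show ?thesis by blast
  qed
qed

lemma card_Zn: "card (Zn n) = nat n" by (simp add: Zn_def)
lemma finite_Zn[simp]: "finite (Zn n)" by (simp add: Zn_def)

lemma aff_card:
  assumes "aff_indep n T" shows "card T \<le> nat n + 1"
proof (rule ccontr)
  assume "\<not> ?thesis"
  hence lt: "card (Some ` Zn n \<union> {None}) < card T"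
    by (simp add: card_insert_if card_image card_Zn)
  define fv where "fv = (\<lambda>(v::int\<Rightarrow>real) j. case j of Some i \<Rightarrow> v i | None \<Rightarrow> 1)"
  have fT: "finite T" using assms unfolding aff_indep_def by simp
  obtain c where c: "\<exists>v\<in>T. c v \<noteq> 0" "\<forall>j\<in>Some ` Zn n \<union> {None}. (\<Sum>v\<in>T. c v * fv v j) = 0"
    using core[OF _ fT lt, of fv] by auto
  have "\<forall>i\<in>Zn n. (\<Sum>v\<in>T. c v * v i) = 0" using c(2) by (auto simp: fv_def)
  moreover have "(\<Sum>v\<in>T. c v) = 0" using c(2) by (auto simp: fv_def)
  ultimately have "\<forall>v\<in>T. c v = 0" using assms unfolding aff_indep_def by blast
  thus False using c(1) by blast
qed

lemma zero_functional:
  assumes ai: "aff_indep n T" and cT: "card T = nat n + 1"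
    and hv: "\<forall>v\<in>T. (\<Sum>i\<in>Zn n. h i * v i) + h0 = 0"
  shows "(\<forall>i\<in>Zn n. h i = 0) \<and> h0 = 0"
proof -
  have fT: "finite T" using ai unfolding aff_indep_def by simp
  define fv where "fv = (\<lambda>w j. case w of Some v \<Rightarrow> (case j of Some i \<Rightarrow> v i | None \<Rightarrow> 1)
       | None \<Rightarrow> (case j of Some i \<Rightarrow> h i | None \<Rightarrow> h0))"
  define V where "V = insert None (Some ` T)"
  have fV: "finite V" using fT by (simp add: V_def)
  have lt: "card (Some ` Zn n \<union> {None}) < card V"
    using cT fT by (simp add: V_def card_insert_if card_image card_Zn)
  obtain c where c: "\<exists>v\<in>V. c v \<noteq> 0" "\<forall>j\<in>Some ` Zn n \<union> {None}. (\<Sum>v\<in>V. c v * fv v j) = 0"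
    using core[OF _ fV lt, of fv] by auto
  define d where "d = (\<lambda>v. c (Some v))"
  have sumV: "(\<Sum>v\<in>V. c v * fv v j) = c None * fv None j + (\<Sum>v\<in>T. d v * fv (Some v) j)" for j
    using fT by (simp add: V_def sum.reindex d_def)
  have e1: "\<forall>i\<in>Zn n. c None * h i + (\<Sum>v\<in>T. d v * v i) = 0"
    using c(2) sumV by (auto simp: fv_def)
  have e0: "c None * h0 + (\<Sum>v\<in>T. d v) = 0"
    using c(2) sumV[of None] by (auto simp: fv_def)
  have cN: "c None \<noteq> 0"
  proof
    assume z: "c None = 0"
    hence "\<forall>v\<in>T. d v = 0" using ai e1 e0 unfolding aff_indep_def by auto
    thus False using c(1) z by (auto simp: V_def d_def)
  qed
  have "c None * ((\<Sum>i\<in>Zn n. h i * h i) + h0 * h0)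
      = (\<Sum>i\<in>Zn n. h i * (c None * h i)) + h0 * (c None * h0)"
    by (simp add: algebra_simps sum_distrib_left)
  also have "\<dots> = (\<Sum>i\<in>Zn n. h i * (- (\<Sum>v\<in>T. d v * v i))) + h0 * (- (\<Sum>v\<in>T. d v))"
    using e1 e0 by (smt (verit) sum.cong)
  also have "\<dots> = - (\<Sum>v\<in>T. d v * ((\<Sum>i\<in>Zn n. h i * v i) + h0))"
    by (simp add: sum_distrib_left sum_distrib_right algebra_simps sum_negf sum.distrib sum.swap[of _ "Zn n" T])
  also have "\<dots> = 0" using hv by simp
  finally have "(\<Sum>i\<in>Zn n. h i * h i) + h0 * h0 = 0" using cN by simp
  moreover have "(\<Sum>i\<in>Zn n. h i * h i) \<ge> 0" by (simp add: sum_nonneg)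
  ultimately have s0: "(\<Sum>i\<in>Zn n. h i * h i) = 0" and "h0 * h0 = 0"
    by (smt (verit) zero_le_square)+
  hence "\<forall>i\<in>Zn n. h i * h i = 0" by (subst sum_nonneg_eq_0_iff[symmetric]) auto
  thus ?thesis using \<open>h0 * h0 = 0\<close> by simp
qed


lemma Cset_mem:
  assumes "0 < n" "k \<le> n"
  shows "x \<in> Cset n k s \<longleftrightarrow> x \<in> Zn n \<and> (x - s) mod n < k"
proof
  assume "x \<in> Cset n k s"
  then obtain t where t: "x = (s + t) mod n" "0 \<le> t" "t < k" unfolding Cset_def by blast
  have "(x - s) mod n = t mod n" using t by (simp add: mod_diff_left_eq)
  also have "\<dots> = t" using t assms by simp
  finally show "x \<in> Zn n \<and> (x - s) mod n < k" using t assms by (simp add: Zn_def)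
next
  assume h: "x \<in> Zn n \<and> (x - s) mod n < k"
  have "(s + (x - s) mod n) mod n = x mod n" by (simp add: mod_add_right_eq)
  also have "\<dots> = x" using h by (simp add: Zn_def)
  finally show "x \<in> Cset n k s" unfolding Cset_def using h assms
    by (intro CollectI exI[of _ "(x - s) mod n"]) auto
qed

lemma Cset_sub: "0 < n \<Longrightarrow> Cset n k s \<subseteq> Zn n"
  unfolding Cset_def Zn_def by auto

lemma card_Cset:
  assumes "0 < n" "0 \<le> k" "k \<le> n"
  shows "card (Cset n k s) = nat k"
proof -
  have e: "Cset n k s = (\<lambda>t. (s + t) mod n) ` {0..<k}" unfolding Cset_def by auto
  have "inj_on (\<lambda>t. (s + t) mod n) {0..<k}"
  proof (rule inj_on_inverseI[where g = "\<lambda>x. (x - s) mod n"])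
    fix t assume "t \<in> {0..<k}"
    thus "((s + t) mod n - s) mod n = t" using assms by (simp add: mod_diff_left_eq)
  qed
  thus ?thesis using e by (simp add: card_image)
qed

lemma lhs_charvec:
  assumes "S \<subseteq> Zn n"
  shows "lhs n b (charvec S) = real_of_int (\<Sum>j\<in>S. b j)"
proof -
  have "lhs n b (charvec S) = (\<Sum>i\<in>Zn n. if i \<in> S then real_of_int (b i) else 0)"
    unfolding lhs_def charvec_def by (rule sum.cong) auto
  also have "\<dots> = (\<Sum>i\<in>Zn n \<inter> S. real_of_int (b i))" by (simp add: sum.inter_restrict)
  also have "Zn n \<inter> S = S" using assms by blast
  finally show ?thesis by simp
qed

lemma finite_covers: "finite {S. is_cover n k S}"
  by (rule finite_subset[of _ "Pow (Zn n)"]) (auto simp: is_cover_def)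

lemma cover_in_Q:
  assumes "is_cover n k S" shows "charvec S \<in> Qpoly n k"
proof -
  define \<mu> where "\<mu> = (\<lambda>T::int set. if T = S then (1::real) else 0)"
  have "(\<Sum>T\<in>{S. is_cover n k S}. \<mu> T) = 1"
    using assms finite_covers[of n k] by (simp add: \<mu>_def sum.delta)
  moreover have "charvec S = (\<lambda>i. \<Sum>T\<in>{S. is_cover n k S}. \<mu> T * charvec T i)"
  proof
    fix i
    have "(\<Sum>T\<in>{S. is_cover n k S}. \<mu> T * charvec T i) = (\<Sum>T\<in>{S. is_cover n k S}. if T = S then charvec S i else 0)"
      by (rule sum.cong) (auto simp: \<mu>_def)
    also have "\<dots> = charvec S i" using assms finite_covers[of n k] by (simp add: sum.delta)
    finally show "charvec S i = (\<Sum>T\<in>{S. is_cover n k S}. \<mu> T * charvec T i)" by simp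
  qed
  ultimately show ?thesis unfolding Qpoly_def by (intro CollectI exI[of _ \<mu>]) (auto simp: \<mu>_def)
qed

lemma lhs_comb:
  "lhs n b (\<lambda>i. \<Sum>S\<in>A. \<mu> S * charvec S i) = (\<Sum>S\<in>A. \<mu> S * lhs n b (charvec S))"
  unfolding lhs_def by (simp add: sum_distrib_left sum.swap[of _ A] algebra_simps)

lemma valid:
  assumes "facet_defining n k a \<alpha>" "is_cover n k S"
  shows "(\<Sum>j\<in>S. a j) \<ge> \<alpha>"
proof -
  have "lhs n a (charvec S) \<ge> real_of_int \<alpha>"
    using assms cover_in_Q unfolding facet_defining_def by blast
  moreover have "S \<subseteq> Zn n" using assms(2) by (simp add: is_cover_def)
  ultimately have "real_of_int \<alpha> \<le> real_of_int (\<Sum>j\<in>S. a j)" by (simp only: lhs_charvec)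
  thus ?thesis by (simp only: of_int_le_iff)
qed

lemma face_eq:
  assumes fd: "facet_defining n k a \<alpha>" and x: "x \<in> Qpoly n k" "lhs n a x = real_of_int \<alpha>"
    and r: "\<forall>S. is_root n k a \<alpha> S \<longrightarrow> lhs n b (charvec S) = \<beta>"
  shows "lhs n b x = \<beta>"
proof -
  define Cv where "Cv = {S. is_cover n k S}"
  obtain \<mu> where \<mu>: "\<forall>S. \<mu> S \<ge> 0" "(\<Sum>S\<in>Cv. \<mu> S) = 1"
    "x = (\<lambda>i. \<Sum>S\<in>Cv. \<mu> S * charvec S i)"
    using x(1) unfolding Qpoly_def Cv_def by blast
  have fC: "finite Cv" unfolding Cv_def by (rule finite_covers)
  have la: "\<And>S. S \<in> Cv \<Longrightarrow> lhs n a (charvec S) = real_of_int (\<Sum>j\<in>S. a j)"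
    by (rule lhs_charvec) (auto simp: Cv_def is_cover_def)
  have ge: "lhs n a (charvec S) - real_of_int \<alpha> \<ge> 0" if S: "S \<in> Cv" for S
  proof -
    have "\<alpha> \<le> (\<Sum>j\<in>S. a j)" using valid[OF fd] S unfolding Cv_def by blast
    hence "real_of_int \<alpha> \<le> real_of_int (\<Sum>j\<in>S. a j)" by (simp only: of_int_le_iff)
    thus ?thesis using la[OF S] by simp
  qed
  have "(\<Sum>S\<in>Cv. \<mu> S * (lhs n a (charvec S) - real_of_int \<alpha>)) =
        (\<Sum>S\<in>Cv. \<mu> S * lhs n a (charvec S)) - real_of_int \<alpha> * (\<Sum>S\<in>Cv. \<mu> S)"
    by (simp add: algebra_simps sum_subtractf sum_distrib_left)
  also have "\<dots> = 0" using x(2) \<mu> by (simp add: lhs_comb)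
  finally have "\<forall>S\<in>Cv. \<mu> S * (lhs n a (charvec S) - real_of_int \<alpha>) = 0"
    using fC ge \<mu>(1) by (subst sum_nonneg_eq_0_iff[symmetric]) auto
  hence z: "\<forall>S\<in>Cv. \<mu> S * (lhs n b (charvec S) - \<beta>) = 0"
  proof (intro ballI)
    fix S assume h: "\<forall>S\<in>Cv. \<mu> S * (lhs n a (charvec S) - real_of_int \<alpha>) = 0" and S: "S \<in> Cv"
    show "\<mu> S * (lhs n b (charvec S) - \<beta>) = 0"
    proof (cases "\<mu> S = 0")
      case False
      have "\<mu> S * (lhs n a (charvec S) - real_of_int \<alpha>) = 0" using h S by blast
      hence "lhs n a (charvec S) = real_of_int \<alpha>" using False by simp
      hence "is_root n k a \<alpha> S" using S la[OF S] unfolding is_root_def Cv_def by (metis of_int_eq_iff mem_Collect_eq)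
      thus ?thesis using r by simp
    qed simp
  qed
  have "lhs n b x - \<beta> = (\<Sum>S\<in>Cv. \<mu> S * (lhs n b (charvec S) - \<beta>))"
    using \<mu> by (simp add: lhs_comb algebra_simps sum_subtractf sum_distrib_left[symmetric])
  also have "\<dots> = 0" using z by (intro sum.neutral) blast
  finally show ?thesis by simp
qed

lemma aff_insert:
  assumes ai: "aff_indep n T" and z: "\<forall>v\<in>T. (\<Sum>i\<in>Zn n. w i * v i) + w0 = 0"
    and p: "(\<Sum>i\<in>Zn n. w i * p i) + w0 \<noteq> 0"
  shows "aff_indep n (insert p T)"
proof -
  have fT: "finite T" using ai by (simp add: aff_indep_def)
  have pT: "p \<notin> T" using z p by blast
  { fix c :: "(int \<Rightarrow> real) \<Rightarrow> real"
    assume c1: "\<forall>i\<in>Zn n. (\<Sum>v\<in>insert p T. c v * v i) = 0" and c2: "(\<Sum>v\<in>insert p T. c v) = 0"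
    define \<phi> where "\<phi> = (\<lambda>v. (\<Sum>i\<in>Zn n. w i * v i) + w0)"
    have "(\<Sum>v\<in>insert p T. c v * \<phi> v) = (\<Sum>i\<in>Zn n. w i * (\<Sum>v\<in>insert p T. c v * v i)) + w0 * (\<Sum>v\<in>insert p T. c v)"
      unfolding \<phi>_def by (simp add: algebra_simps sum.distrib sum_distrib_left sum.swap[of _ "Zn n"])
    also have "\<dots> = 0" using c1 c2 by simp
    finally have "c p * \<phi> p = 0" using fT pT z by (simp add: \<phi>_def)
    hence cp: "c p = 0" using p by (simp add: \<phi>_def)
    have "\<forall>i\<in>Zn n. (\<Sum>v\<in>T. c v * v i) = 0" "(\<Sum>v\<in>T. c v) = 0"
      using c1 c2 cp fT pT by auto
    hence "\<forall>v\<in>T. c v = 0" using ai unfolding aff_indep_def by blast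
    hence "\<forall>v\<in>insert p T. c v = 0" using cp by simp }
  thus ?thesis using fT unfolding aff_indep_def by simp
qed


lemma cover_Zn:
  assumes "0 < n" "1 \<le> k" "k \<le> n" shows "is_cover n k (Zn n)"
  unfolding is_cover_def
proof (intro conjI ballI)
  fix i assume "i \<in> Zn n"
  have "i mod n \<in> Cset n k i" using assms by (simp add: Cset_mem Zn_def mod_diff_left_eq)
  moreover have "i mod n \<in> Zn n" using assms by (simp add: Zn_def)
  ultimately show "Cset n k i \<inter> Zn n \<noteq> {}" by blast
qed simp

lemma cover_minus:
  assumes "2 \<le> k" "k \<le> n - 1" shows "is_cover n k (Zn n - {j})"
  unfolding is_cover_def
proof (intro conjI ballI)
  fix i assume "i \<in> Zn n"
  have n: "0 < n" "k \<le> n" using assms by auto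
  have a: "i mod n \<in> Cset n k i" using assms n by (simp add: Cset_mem Zn_def mod_diff_left_eq)
  have b: "(i + 1) mod n \<in> Cset n k i" using assms n by (simp add: Cset_mem Zn_def mod_diff_left_eq)
  have ne: "i mod n \<noteq> (i + 1) mod n"
  proof
    assume "i mod n = (i + 1) mod n"
    hence "n dvd (i + 1) - i" by (metis mod_eq_dvd_iff)
    hence "n dvd 1" by simp
    thus False using assms by simp
  qed
  have "i mod n \<in> Zn n" "(i + 1) mod n \<in> Zn n" using n by (auto simp: Zn_def)
  thus "Cset n k i \<inter> (Zn n - {j}) \<noteq> {}" using a b ne by blast
qed auto

lemma full_dim:
  assumes k: "2 \<le> k" "k \<le> n - 1"
  shows "\<exists>T \<subseteq> Qpoly n k. aff_indep n T \<and> card T = nat n + 1"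
proof -
  have n: "0 < n" "1 \<le> k" "k \<le> n" using k by auto
  define P0 where "P0 = charvec (Zn n)"
  define P where "P = (\<lambda>j. charvec (Zn n - {j}))"
  define T where "T = insert P0 (P ` Zn n)"
  have Pv: "P j i = (if i \<in> Zn n \<and> i \<noteq> j then 1 else 0)" for i j by (simp add: P_def charvec_def)
  have P0v: "P0 i = (if i \<in> Zn n then 1 else 0)" for i by (simp add: P0_def charvec_def)
  have inj: "inj_on P (Zn n)"
  proof (rule inj_onI)
    fix x y assume "x \<in> Zn n" "y \<in> Zn n" "P x = P y"
    hence "P x x = P y x" by simp
    thus "x = y" using \<open>x \<in> Zn n\<close> by (auto simp: Pv split: if_splits)
  qed
  have P0n: "P0 \<notin> P ` Zn n"
  proof
    assume "P0 \<in> P ` Zn n"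
    then obtain j where "j \<in> Zn n" "P0 = P j" by blast
    hence "P0 j = P j j" by simp
    thus False using \<open>j \<in> Zn n\<close> by (simp add: Pv P0v)
  qed
  have cT: "card T = nat n + 1"
    using inj P0n by (simp add: T_def card_image card_Zn)
  have sub: "T \<subseteq> Qpoly n k"
    unfolding T_def P0_def P_def using cover_in_Q cover_Zn[OF n] cover_minus[OF k] by auto
  have ai: "aff_indep n T"
    unfolding aff_indep_def
  proof (intro conjI allI impI)
    show "finite T" by (simp add: T_def)
    fix c :: "(int \<Rightarrow> real) \<Rightarrow> real"
    assume h: "(\<forall>i\<in>Zn n. (\<Sum>v\<in>T. c v * v i) = 0) \<and> (\<Sum>v\<in>T. c v) = 0"
    have sT: "(\<Sum>v\<in>T. g v) = g P0 + (\<Sum>j\<in>Zn n. g (P j))" for g :: "(int \<Rightarrow> real) \<Rightarrow> real"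
      using inj P0n by (simp add: T_def sum.reindex)
    have cP: "c (P i) = 0" if i: "i \<in> Zn n" for i
    proof -
      have "(\<Sum>j\<in>Zn n. c (P j) * P j i) = (\<Sum>j\<in>Zn n. c (P j) - (if j = i then c (P j) else 0))"
        by (rule sum.cong) (auto simp: Pv i)
      also have "\<dots> = (\<Sum>j\<in>Zn n. c (P j)) - c (P i)"
        using i by (simp add: sum_subtractf sum.delta)
      finally have "0 = c P0 + (\<Sum>j\<in>Zn n. c (P j)) - c (P i)"
        using h i sT[of "\<lambda>v. c v * v i"] by (simp add: P0v)
      moreover have "c P0 + (\<Sum>j\<in>Zn n. c (P j)) = 0" using h sT[of c] by simp
      ultimately show ?thesis by simp
    qed
    hence "c P0 = 0" using h sT[of c] by simp
    thus "\<forall>v\<in>T. c v = 0" using cP by (auto simp: T_def)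
  qed
  show ?thesis using sub ai cT by blast
qed

lemma aff_empty: "aff_indep n {}" by (simp add: aff_indep_def)

lemma adim_bound: "T \<subseteq> X \<Longrightarrow> aff_indep n T \<Longrightarrow> 0 \<le> n \<Longrightarrow> int (card T) - 1 \<le> n"
  using aff_card[of n T] by linarith

lemma finite_A: "0 \<le> n \<Longrightarrow> finite {int (card T) - 1 | T. T \<subseteq> X \<and> aff_indep n T}"
  by (rule finite_subset[of _ "{-1..n}"]) (auto dest: adim_bound)

lemma adim_Q:
  assumes k: "2 \<le> k" "k \<le> n - 1"
  shows "adim n (Qpoly n k) = n"
proof -
  obtain T where T: "T \<subseteq> Qpoly n k" "aff_indep n T" "card T = nat n + 1" using full_dim[OF k] by blast
  have ne: "Qpoly n k \<noteq> {}" using T k by auto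
  have n0: "0 \<le> n" using k by simp
  let ?A = "{int (card T) - 1 | T. T \<subseteq> Qpoly n k \<and> aff_indep n T}"
  have "n \<in> ?A" using T n0 by (intro CollectI exI[of _ T]) auto
  moreover have "\<forall>x\<in>?A. x \<le> n" using adim_bound n0 by blast
  ultimately have "Max ?A = n" using finite_A[OF n0] by (intro Max_eqI) auto
  thus ?thesis using ne by (simp add: adim_def)
qed

lemma adim_witness:
  assumes "X \<noteq> {}" "adim n X = m" "0 \<le> n"
  shows "\<exists>T \<subseteq> X. aff_indep n T \<and> int (card T) - 1 = m"
proof -
  let ?A = "{int (card T) - 1 | T. T \<subseteq> X \<and> aff_indep n T}"
  have "-1 \<in> ?A" using aff_empty by (intro CollectI exI[of _ "{}"]) auto
  hence "Max ?A \<in> ?A" using finite_A[OF assms(3)] by (intro Max_in) auto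
  moreover have "Max ?A = m" using assms by (simp add: adim_def)
  ultimately show ?thesis by auto
qed


lemma facet_unique:
  assumes k: "2 \<le> k" "k \<le> n - 1" and fd: "facet_defining n k a \<alpha>"
    and P: "is_cover n k P" and fP: "(\<Sum>j\<in>P. b j) > \<beta>"
    and roots: "\<forall>S. is_root n k a \<alpha> S \<longrightarrow> (\<Sum>j\<in>S. b j) = \<beta>"
  shows "\<exists>t>0. (\<forall>j\<in>Zn n. real_of_int (a j) = t * real_of_int (b j)) \<and> real_of_int \<alpha> = t * real_of_int \<beta>"
proof -
  define Q where "Q = Qpoly n k"
  define F where "F = {x\<in>Q. lhs n a x = real_of_int \<alpha>}"
  have vQ: "\<forall>x\<in>Q. lhs n a x \<ge> real_of_int \<alpha>" and Fne: "F \<noteq> {}" and dF: "adim n F = adim n Q - 1"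
    using fd unfolding facet_defining_def Q_def F_def Let_def by auto
  have n0: "0 \<le> n" using k by simp
  have aQ: "adim n Q = n" unfolding Q_def by (rule adim_Q[OF k])
  obtain T where T: "T \<subseteq> F" "aff_indep n T" "int (card T) - 1 = n - 1"
    using adim_witness[OF Fne _ n0] dF aQ by auto
  have cT: "card T = nat n" using T(3) by simp
  define p where "p = charvec P"
  have PZ: "P \<subseteq> Zn n" using P by (simp add: is_cover_def)
  have pQ: "p \<in> Q" unfolding p_def Q_def by (rule cover_in_Q[OF P])
  define fp where "fp = lhs n b p - real_of_int \<beta>"
  define gp where "gp = lhs n a p - real_of_int \<alpha>"
  have fp_pos: "fp > 0" unfolding fp_def p_def using fP PZ by (simp add: lhs_charvec del: of_int_sum)
  have gp_nn: "gp \<ge> 0" unfolding gp_def using vQ pQ by simp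
  have onT: "lhs n a v = real_of_int \<alpha> \<and> lhs n b v = real_of_int \<beta>" if v: "v \<in> T" for v
  proof -
    have vF: "v \<in> Q" "lhs n a v = real_of_int \<alpha>" using v T(1) by (auto simp: F_def)
    have "lhs n b v = real_of_int \<beta>"
    proof (rule face_eq[OF fd vF[unfolded Q_def]], intro allI impI)
      fix S assume "is_root n k a \<alpha> S"
      hence "(\<Sum>j\<in>S. b j) = \<beta>" "S \<subseteq> Zn n" using roots by (auto simp: is_root_def is_cover_def)
      thus "lhs n b (charvec S) = real_of_int \<beta>" by (simp add: lhs_charvec del: of_int_sum)
    qed
    thus ?thesis using vF by simp
  qed
  have ai': "aff_indep n (insert p T)"
  proof (rule aff_insert[OF T(2), of "\<lambda>i. real_of_int (b i)" "- real_of_int \<beta>"])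
    show "\<forall>v\<in>T. (\<Sum>i\<in>Zn n. real_of_int (b i) * v i) + - real_of_int \<beta> = 0"
      using onT unfolding lhs_def by simp
    show "(\<Sum>i\<in>Zn n. real_of_int (b i) * p i) + - real_of_int \<beta> \<noteq> 0"
      using fp_pos unfolding fp_def lhs_def by simp
  qed
  have pT: "p \<notin> T" using onT fp_pos unfolding fp_def by auto
  have cT': "card (insert p T) = nat n + 1"
    using pT cT T(2) by (simp add: aff_indep_def)
  define h where "h = (\<lambda>i. fp * real_of_int (a i) - gp * real_of_int (b i))"
  define h0 where "h0 = - (fp * real_of_int \<alpha> - gp * real_of_int \<beta>)"
  have hform: "(\<Sum>i\<in>Zn n. h i * v i) + h0 = fp * (lhs n a v - real_of_int \<alpha>) - gp * (lhs n b v - real_of_int \<beta>)" for v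
    unfolding h_def h0_def lhs_def by (simp add: algebra_simps sum_subtractf sum_distrib_left)
  have "\<forall>v\<in>insert p T. (\<Sum>i\<in>Zn n. h i * v i) + h0 = 0"
  proof
    fix v assume "v \<in> insert p T"
    thus "(\<Sum>i\<in>Zn n. h i * v i) + h0 = 0"
    proof
      assume "v = p" thus ?thesis unfolding hform fp_def gp_def by simp
    next
      assume "v \<in> T" thus ?thesis unfolding hform using onT by simp
    qed
  qed
  from zero_functional[OF ai' cT' this]
  have hz: "\<forall>i\<in>Zn n. h i = 0" "h0 = 0" by auto
  define t where "t = gp / fp"
  have aj: "\<forall>j\<in>Zn n. real_of_int (a j) = t * real_of_int (b j)"
    using hz(1) fp_pos unfolding h_def t_def by (auto simp: field_simps)
  have al: "real_of_int \<alpha> = t * real_of_int \<beta>"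
    using hz(2) fp_pos unfolding h0_def t_def by (auto simp: field_simps)
  have "t \<noteq> 0"
  proof
    assume t0: "t = 0"
    have "F = Q"
    proof -
      have "lhs n a x = real_of_int \<alpha>" for x
        using aj al t0 unfolding lhs_def by simp
      thus ?thesis unfolding F_def by auto
    qed
    thus False using dF by simp
  qed
  moreover have "t \<ge> 0" unfolding t_def using gp_nn fp_pos by simp
  ultimately show ?thesis using aj al by (intro exI[of _ t]) auto
qed

lemma not_facet_k1:
  assumes "k = 1" "1 \<le> n - 1" shows "\<not> facet_defining n k a \<alpha>"
proof
  assume fd: "facet_defining n k a \<alpha>"
  have n: "0 < n" using assms by simp
  have cov: "is_cover n k S \<longleftrightarrow> S = Zn n" for S
  proof
    assume c: "is_cover n k S"
    have "i \<in> S" if i: "i \<in> Zn n" for i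
    proof -
      obtain x where x: "x \<in> Cset n k i" "x \<in> S" using c i unfolding is_cover_def by blast
      have "x \<in> Zn n" "(x - i) mod n < 1" using x(1) n assms by (auto simp: Cset_mem)
      hence "(x - i) mod n = 0" by (smt (verit) pos_mod_sign n)
      hence "x mod n = i mod n" by (metis mod_eq_dvd_iff dvd_eq_mod_eq_0)
      hence "x = i" using \<open>x \<in> Zn n\<close> i by (simp add: Zn_def)
      thus ?thesis using x by simp
    qed
    thus "S = Zn n" using c unfolding is_cover_def by blast
  next
    assume "S = Zn n" thus "is_cover n k S" using cover_Zn[of n k] n assms by simp
  qed
  hence Cv: "{S. is_cover n k S} = {Zn n}" by auto
  have Q1: "Qpoly n k \<subseteq> {charvec (Zn n)}"
  proof
    fix x assume "x \<in> Qpoly n k"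
    then obtain \<mu> where "(\<Sum>S\<in>{S. is_cover n k S}. \<mu> S) = 1"
        "x = (\<lambda>i. \<Sum>S\<in>{S. is_cover n k S}. \<mu> S * charvec S i)" unfolding Qpoly_def by blast
    thus "x \<in> {charvec (Zn n)}" unfolding Cv by simp
  qed
  define F where "F = {x\<in>Qpoly n k. lhs n a x = real_of_int \<alpha>}"
  have "F \<noteq> {}" "adim n F = adim n (Qpoly n k) - 1"
    using fd unfolding facet_defining_def F_def Let_def by auto
  moreover have "F \<subseteq> Qpoly n k" unfolding F_def by auto
  ultimately have "F = Qpoly n k" using Q1 by blast
  thus False using \<open>adim n F = adim n (Qpoly n k) - 1\<close> by simp
qed


lemma mod_eqI': "(0::int) < n \<Longrightarrow> 0 \<le> y \<Longrightarrow> y < n \<Longrightarrow> n dvd (x - y) \<Longrightarrow> x mod n = y"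
  by (metis mod_eq_dvd_iff mod_pos_pos_trivial)

lemma mdvd: "(n::int) dvd (z - z mod n)"
  by (simp add: minus_mod_eq_mult_div)

lemma dvd3: "(n::int) dvd A \<Longrightarrow> n dvd B \<Longrightarrow> n dvd C \<Longrightarrow> X = p * A + q * B + r * C \<Longrightarrow> n dvd X"
  by simp

lemma mod_inj_Zn: "x \<in> Zn n \<Longrightarrow> y \<in> Zn n \<Longrightarrow> (x - s) mod n = (y - s) mod n \<Longrightarrow> x = y"
proof -
  assume x: "x \<in> Zn n" and y: "y \<in> Zn n" and h: "(x - s) mod n = (y - s) mod n"
  have "n dvd (x - s) - (y - s)" using h by (metis mod_eq_dvd_iff)
  hence "x mod n = y mod n" by (simp add: mod_eq_dvd_iff)
  thus "x = y" using x y by (simp add: Zn_def)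
qed

lemma del_cover:
  assumes n: "0 < n" "k \<le> n" and S: "is_cover n k S" and p: "p \<in> S"
    and h: "\<forall>s. (p - s) mod n < k \<longrightarrow> (\<exists>q\<in>S. q \<noteq> p \<and> (q - s) mod n < k)"
  shows "is_cover n k (S - {p})"
  unfolding is_cover_def
proof (intro conjI ballI)
  show "S - {p} \<subseteq> Zn n" using S by (auto simp: is_cover_def)
  fix s assume s: "s \<in> Zn n"
  obtain x where x: "x \<in> Cset n k s" "x \<in> S" using S s unfolding is_cover_def by blast
  show "Cset n k s \<inter> (S - {p}) \<noteq> {}"
  proof (cases "x = p")
    case True
    hence "(p - s) mod n < k" using x n by (simp add: Cset_mem)
    then obtain q where "q \<in> S" "q \<noteq> p" "(q - s) mod n < k" using h by blast
    moreover have "q \<in> Zn n" using \<open>q \<in> S\<close> S by (auto simp: is_cover_def)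
    ultimately show ?thesis using n by (auto simp: Cset_mem)
  qed (use x in auto)
qed

lemma swap_cover:
  assumes n: "0 < n" "k \<le> n" and S: "is_cover n k S" and i: "i \<in> S" and l: "l \<in> Zn n"
    and h: "\<forall>s. (i - s) mod n < k \<longrightarrow> (\<exists>q\<in>S. q \<noteq> i \<and> (q - s) mod n < k) \<or> (l - s) mod n < k"
  shows "is_cover n k (insert l (S - {i}))"
  unfolding is_cover_def
proof (intro conjI ballI)
  show "insert l (S - {i}) \<subseteq> Zn n" using S l by (auto simp: is_cover_def)
  fix s assume s: "s \<in> Zn n"
  obtain x where x: "x \<in> Cset n k s" "x \<in> S" using S s unfolding is_cover_def by blast
  show "Cset n k s \<inter> insert l (S - {i}) \<noteq> {}"
  proof (cases "x = i")
    case True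
    hence "(i - s) mod n < k" using x n by (simp add: Cset_mem)
    hence "(\<exists>q\<in>S. q \<noteq> i \<and> (q - s) mod n < k) \<or> (l - s) mod n < k" using h by blast
    thus ?thesis
    proof
      assume "\<exists>q\<in>S. q \<noteq> i \<and> (q - s) mod n < k"
      then obtain q where "q \<in> S" "q \<noteq> i" "(q - s) mod n < k" by blast
      moreover have "q \<in> Zn n" using \<open>q \<in> S\<close> S by (auto simp: is_cover_def)
      ultimately show ?thesis using n by (auto simp: Cset_mem)
    next
      assume "(l - s) mod n < k" thus ?thesis using l n by (auto simp: Cset_mem)
    qed
  qed (use x in auto)
qed

lemma swap_sum:
  fixes a :: "int \<Rightarrow> int"
  assumes "finite S" "i \<in> S" "a l \<ge> 0"
  shows "(\<Sum>j\<in>insert l (S - {i}). a j) \<le> (\<Sum>j\<in>S. a j) - a i + a l"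
proof -
  have "(\<Sum>j\<in>insert l (S - {i}). a j) \<le> a l + (\<Sum>j\<in>S - {i}. a j)"
    using assms by (simp add: sum.insert_if)
  also have "(\<Sum>j\<in>S - {i}. a j) = (\<Sum>j\<in>S. a j) - a i" using assms by (simp add: sum_diff1)
  finally show ?thesis by simp
qed

lemma middle:
  fixes n k p1 p2 p3 i s o1 o2 o3 :: int
  assumes n: "0 < n" "k \<le> n"
    and o1: "(p1 - i) mod n = o1" and o2: "(p2 - i) mod n = o2" and o3: "(p3 - i) mod n = o3"
    and lt: "o1 < o2" "o2 < o3" "o3 < k" "0 \<le> o1"
    and u: "(p2 - s) mod n < k"
  shows "(p1 - s) mod n < k \<or> (p3 - s) mod n < k"
proof -
  define u where "u = (p2 - s) mod n"
  have u0: "0 \<le> u" unfolding u_def using n(1) by (rule pos_mod_sign)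
  have d1: "n dvd (p1 - i) - o1" using o1 mdvd by metis
  have d2: "n dvd (p2 - i) - o2" using o2 mdvd by metis
  have d3: "n dvd (p3 - i) - o3" using o3 mdvd by metis
  have du: "n dvd (p2 - s) - u" unfolding u_def by (rule mdvd)
  show ?thesis
  proof (cases "u \<ge> o2 - o1")
    case True
    have uk: "u < k" using u unfolding u_def .
    have "n dvd (p1 - s) - (u - (o2 - o1))"
      by (rule dvd3[OF du d2 d1, where p=1 and q="-1" and r=1]) (simp add: algebra_simps)
    hence "(p1 - s) mod n = u - (o2 - o1)"
      by (intro mod_eqI'[OF n(1)]) (use True uk n lt in linarith)+
    thus ?thesis using u lt unfolding u_def by linarith
  next
    case False
    have "n dvd (p3 - s) - (u + (o3 - o2))"
      by (rule dvd3[OF du d2 d3, where p=1 and q="-1" and r=1]) (simp add: algebra_simps)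
    hence "(p3 - s) mod n = u + (o3 - o2)"
      by (intro mod_eqI'[OF n(1)]) (use False u0 lt n in linarith)+
    thus ?thesis using False lt by linarith
  qed
qed


lemma dvd4: "(n::int) dvd A \<Longrightarrow> n dvd B \<Longrightarrow> n dvd C \<Longrightarrow> n dvd D \<Longrightarrow> X = p * A + q * B + r * C + s * D \<Longrightarrow> n dvd X"
  by simp

lemma sum_ind: "finite S \<Longrightarrow> (\<Sum>j\<in>S. (if j \<in> C then 1 else 0::int)) = int (card (S \<inter> C))"
  using sum.inter_restrict[of S "\<lambda>_. (1::int)" C] by simp

lemma bool0:
  assumes k: "2 \<le> k" "k \<le> n - 1" and fd: "facet_defining n k a \<alpha>" and i: "i \<in> Zn n"
    and r: "\<forall>S. is_root n k a \<alpha> S \<longrightarrow> i \<notin> S"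
  shows "boolean_or_rank n k a \<alpha>"
proof -
  define b where "b = (\<lambda>j::int. if j = i then (1::int) else 0)"
  have n: "0 < n" "1 \<le> k" "k \<le> n" using k by auto
  have P: "(\<Sum>j\<in>Zn n. b j) > 0" using i by (simp add: b_def)
  have R: "\<forall>S. is_root n k a \<alpha> S \<longrightarrow> (\<Sum>j\<in>S. b j) = 0"
  proof (intro allI impI)
    fix S assume "is_root n k a \<alpha> S"
    hence "i \<notin> S" using r by blast
    thus "(\<Sum>j\<in>S. b j) = 0" unfolding b_def by (intro sum.neutral) auto
  qed
  obtain t where t: "t > 0" "\<forall>j\<in>Zn n. real_of_int (a j) = t * real_of_int (b j)"
     "real_of_int \<alpha> = t * real_of_int 0"
    using facet_unique[OF k fd cover_Zn[OF n] P R] by blast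
  show ?thesis unfolding boolean_or_rank_def
    by (rule exI[of _ t], rule conjI[OF t(1)], rule disjI1, rule bexI[OF _ i]) (use t in \<open>auto simp: b_def\<close>)
qed

lemma bool1:
  assumes k: "2 \<le> k" "k \<le> n - 1" and fd: "facet_defining n k a \<alpha>" and i: "i \<in> Zn n"
    and r: "\<forall>S. is_root n k a \<alpha> S \<longrightarrow> i \<in> S"
  shows "boolean_or_rank n k a \<alpha>"
proof -
  define b where "b = (\<lambda>j::int. if j = i then (-1::int) else 0)"
  have P: "(\<Sum>j\<in>Zn n - {i}. b j) > -1" unfolding b_def by (simp add: sum.neutral)
  have R: "\<forall>S. is_root n k a \<alpha> S \<longrightarrow> (\<Sum>j\<in>S. b j) = -1"
  proof (intro allI impI)
    fix S assume S: "is_root n k a \<alpha> S"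
    hence "finite S" "i \<in> S" using r finite_subset[OF _ finite_Zn[of n]]
      by (auto simp: is_root_def is_cover_def)
    thus "(\<Sum>j\<in>S. b j) = -1" by (simp add: b_def)
  qed
  obtain t where t: "t > 0" "\<forall>j\<in>Zn n. real_of_int (a j) = t * real_of_int (b j)"
     "real_of_int \<alpha> = t * real_of_int (-1)"
    using facet_unique[OF k fd cover_minus[OF k] P R] by blast
  show ?thesis unfolding boolean_or_rank_def
    by (rule exI[of _ t], rule conjI[OF t(1)], rule disjI2, rule disjI1, rule bexI[OF _ i]) (use t in \<open>auto simp: b_def\<close>)
qed

lemma boolW:
  assumes k: "2 \<le> k" "k \<le> n - 1" and fd: "facet_defining n k a \<alpha>" and i: "i \<in> Zn n"
    and r: "\<forall>S. is_root n k a \<alpha> S \<longrightarrow> card (S \<inter> Cset n k i) = 1"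
  shows "boolean_or_rank n k a \<alpha>"
proof -
  define b where "b = (\<lambda>j::int. if j \<in> Cset n k i then (1::int) else 0)"
  have n: "0 < n" "1 \<le> k" "k \<le> n" using k by auto
  have "(\<Sum>j\<in>Zn n. b j) = int (card (Zn n \<inter> Cset n k i))" unfolding b_def by (rule sum_ind) simp
  also have "Zn n \<inter> Cset n k i = Cset n k i" using Cset_sub[OF n(1)] by blast
  also have "int (card (Cset n k i)) = k" using card_Cset[of n k i] n by simp
  finally have P: "(\<Sum>j\<in>Zn n. b j) > 1" using k by simp
  have R: "\<forall>S. is_root n k a \<alpha> S \<longrightarrow> (\<Sum>j\<in>S. b j) = 1"
  proof (intro allI impI)
    fix S assume S: "is_root n k a \<alpha> S"
    hence "finite S" using finite_subset[OF _ finite_Zn[of n]] by (auto simp: is_root_def is_cover_def)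
    hence "(\<Sum>j\<in>S. b j) = int (card (S \<inter> Cset n k i))" unfolding b_def by (rule sum_ind)
    thus "(\<Sum>j\<in>S. b j) = 1" using r S by simp
  qed
  obtain t where t: "t > 0" "\<forall>j\<in>Zn n. real_of_int (a j) = t * real_of_int (b j)"
     "real_of_int \<alpha> = t * real_of_int 1"
    using facet_unique[OF k fd cover_Zn[OF n] P R] by blast
  show ?thesis unfolding boolean_or_rank_def
    by (rule exI[of _ t], rule conjI[OF t(1)], rule disjI2, rule disjI2, rule disjI1, rule bexI[OF _ i]) (use t in \<open>auto simp: b_def\<close>)
qed


theorem mainTheorem1:
  fixes n k \<alpha> :: int and a :: "int \<Rightarrow> int"
  assumes "1 \<le> k" and "k \<le> n - 1"
    and "facet_defining n k a \<alpha>"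
    and "\<not> boolean_or_rank n k a \<alpha>"
  defines "a0 \<equiv> Min (a ` Zn n)"
  defines "W \<equiv> {i\<in>Zn n. a i > a0}"
  shows "(\<forall>i\<in>Zn n.
            (\<exists>S. is_root n k a \<alpha> S \<and> i \<in> S) \<and>
            (\<exists>S. is_root n k a \<alpha> S \<and> i \<notin> S) \<and>
            (\<exists>S. is_root n k a \<alpha> S \<and> card (S \<inter> Cset n k i) = 2))
       \<and> (\<forall>i\<in>W. \<forall>S. is_root n k a \<alpha> S \<and> i \<in> S \<longrightarrow>
            (\<forall>j. j \<noteq> i \<and> j \<in> S \<inter> Cset n k ((i - k + 1) mod n) \<longrightarrow> cint n i ((j + k) mod n) \<subseteq> W) \<and>
            (\<forall>j. j \<noteq> i \<and> j \<in> S \<inter> Cset n k i \<longrightarrow> cint n ((j - k) mod n) i \<subseteq> W))"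
proof -
  note fd = assms(3) and nb = assms(4)
  have k2: "2 \<le> k"
  proof (rule ccontr)
    assume "\<not> 2 \<le> k" hence "k = 1" using assms(1) by simp
    thus False using not_facet_k1[of k n a \<alpha>] fd assms(2) by simp
  qed
  have kn: "k \<le> n - 1" by fact
  have n: "0 < n" "k \<le> n" "1 \<le> k" using k2 kn by auto
  have rootZ: "S \<subseteq> Zn n" "finite S" "is_cover n k S" "(\<Sum>j\<in>S. a j) = \<alpha>" if "is_root n k a \<alpha> S" for S
    using that finite_subset[OF _ finite_Zn[of n]] by (auto simp: is_root_def is_cover_def)
  have ex_in: "\<forall>i\<in>Zn n. \<exists>S. is_root n k a \<alpha> S \<and> i \<in> S"
    using bool0[OF k2 kn fd] nb by blast
  have ex_out: "\<forall>i\<in>Zn n. \<exists>S. is_root n k a \<alpha> S \<and> i \<notin> S"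
    using bool1[OF k2 kn fd] nb by blast
  have nonneg: "0 \<le> a j" if j: "j \<in> Zn n" for j
  proof -
    obtain S where S: "is_root n k a \<alpha> S" "j \<notin> S" using ex_out j by blast
    have "is_cover n k (insert j S)" using rootZ(3)[OF S(1)] j unfolding is_cover_def by blast
    hence "\<alpha> \<le> (\<Sum>x\<in>insert j S. a x)" by (rule valid[OF fd])
    thus ?thesis using rootZ[OF S(1)] S(2) by simp
  qed
  have Zne: "Zn n \<noteq> {}" using n by (auto simp: Zn_def)
  have a0nn: "0 \<le> a0"
  proof -
    have "a0 \<in> a ` Zn n" unfolding a0_def using Zne by (intro Min_in) auto
    thus ?thesis using nonneg by auto
  qed
  have key: "x \<in> W" if S: "is_root n k a \<alpha> S" and iS: "i \<in> S" and iW: "i \<in> W" and x: "x \<in> Zn n"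
      and cov: "is_cover n k (insert x (S - {i}))" for S i x
  proof -
    have "\<alpha> \<le> (\<Sum>j\<in>insert x (S - {i}). a j)" by (rule valid[OF fd cov])
    also have "\<dots> \<le> (\<Sum>j\<in>S. a j) - a i + a x" by (rule swap_sum[of S i a x, OF rootZ(2)[OF S] iS nonneg[OF x]])
    finally have "a i \<le> a x" using rootZ(4)[OF S] by simp
    thus ?thesis using iW x unfolding W_def by auto
  qed
  have ex2: "\<exists>S. is_root n k a \<alpha> S \<and> card (S \<inter> Cset n k i) = 2" if i: "i \<in> Zn n" for i
  proof -
    define C where "C = Cset n k i"
    have step: "\<exists>S'. is_root n k a \<alpha> S' \<and> card (S' \<inter> C) = card (S \<inter> C) - 1"
      if S: "is_root n k a \<alpha> S" and c3: "3 \<le> card (S \<inter> C)" for S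
    proof -
      define Oo where "Oo = (\<lambda>x. (x - i) mod n) ` (S \<inter> C)"
      have SCZ: "S \<inter> C \<subseteq> Zn n" using rootZ(1)[OF S] by blast
      have inj: "inj_on (\<lambda>x. (x - i) mod n) (S \<inter> C)"
        by (rule inj_onI) (use SCZ mod_inj_Zn in blast)
      have cO: "card Oo = card (S \<inter> C)" unfolding Oo_def using inj by (simp add: card_image)
      have fO: "finite Oo" unfolding Oo_def using rootZ(2)[OF S] by simp
      have One: "Oo \<noteq> {}" using cO c3 by auto
      define o1 where "o1 = Min Oo"
      define o3 where "o3 = Max Oo"
      have o1O: "o1 \<in> Oo" and o3O: "o3 \<in> Oo" using fO One by (auto simp: o1_def o3_def)
      have "Oo - {o1, o3} \<noteq> {}"
      proof
        assume "Oo - {o1, o3} = {}"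
        hence "Oo \<subseteq> {o1, o3}" by blast
        hence "card Oo \<le> card {o1, o3}" by (rule card_mono[rotated]) simp
        also have "\<dots> \<le> 2" by (simp add: card_insert_if)
        finally show False using cO c3 by simp
      qed
      then obtain o2 where o2: "o2 \<in> Oo" "o2 \<noteq> o1" "o2 \<noteq> o3" by blast
      have "o1 \<le> o2" using o2(1) fO unfolding o1_def by simp
      hence lt12: "o1 < o2" using o2(2) by simp
      have "o2 \<le> o3" using o2(1) fO unfolding o3_def by simp
      hence lt23: "o2 < o3" using o2(3) by simp
      obtain p1 where p1: "p1 \<in> S" "p1 \<in> C" "(p1 - i) mod n = o1" using o1O unfolding Oo_def by blast
      obtain p2 where p2: "p2 \<in> S" "p2 \<in> C" "(p2 - i) mod n = o2" using o2 unfolding Oo_def by blast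
      obtain p3 where p3: "p3 \<in> S" "p3 \<in> C" "(p3 - i) mod n = o3" using o3O unfolding Oo_def by blast
      have o3k: "o3 < k" using p3 n unfolding C_def by (simp add: Cset_mem)
      have o10: "0 \<le> o1" using p1(3) n(1) pos_mod_sign by metis
      have S'cov: "is_cover n k (S - {p2})"
      proof (rule del_cover[OF n(1,2) rootZ(3)[OF S] p2(1)], intro allI impI)
        fix s assume "(p2 - s) mod n < k"
        hence "(p1 - s) mod n < k \<or> (p3 - s) mod n < k"
          using middle[OF n(1,2) p1(3) p2(3) p3(3) lt12 lt23 o3k o10] by blast
        moreover have "p1 \<noteq> p2" "p3 \<noteq> p2" using p1(3) p2(3) p3(3) lt12 lt23 by auto
        ultimately show "\<exists>q\<in>S. q \<noteq> p2 \<and> (q - s) mod n < k" using p1 p3 by blast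
      qed
      have sumS': "(\<Sum>j\<in>S - {p2}. a j) = \<alpha> - a p2"
        using rootZ[OF S] p2(1) by (simp add: sum_diff1)
      have "\<alpha> \<le> (\<Sum>j\<in>S - {p2}. a j)" by (rule valid[OF fd S'cov])
      hence "a p2 \<le> 0" using sumS' by simp
      moreover have "0 \<le> a p2" using nonneg p2(1) rootZ(1)[OF S] by blast
      ultimately have "is_root n k a \<alpha> (S - {p2})" using S'cov sumS' by (simp add: is_root_def)
      moreover have "card ((S - {p2}) \<inter> C) = card (S \<inter> C) - 1"
      proof -
        have "(S - {p2}) \<inter> C = (S \<inter> C) - {p2}" by blast
        thus ?thesis using p2 rootZ(2)[OF S] by simp
      qed
      ultimately show ?thesis by blast
    qed
    have start: "\<exists>S. is_root n k a \<alpha> S \<and> 2 \<le> card (S \<inter> C)"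
    proof (rule ccontr)
      assume h: "\<not> ?thesis"
      have "\<forall>S. is_root n k a \<alpha> S \<longrightarrow> card (S \<inter> Cset n k i) = 1"
      proof (intro allI impI)
        fix S assume S: "is_root n k a \<alpha> S"
        have "S \<inter> C \<noteq> {}" using rootZ(3)[OF S] i unfolding is_cover_def C_def by blast
        hence "card (S \<inter> C) \<noteq> 0" using rootZ(2)[OF S] by simp
        moreover have "card (S \<inter> C) < 2" using h S by auto
        ultimately show "card (S \<inter> Cset n k i) = 1" unfolding C_def by simp
      qed
      thus False using boolW[OF k2 kn fd i] nb by blast
    qed
    have "\<forall>S. is_root n k a \<alpha> S \<and> card (S \<inter> C) = m \<and> 2 \<le> m \<longrightarrow>
            (\<exists>S. is_root n k a \<alpha> S \<and> card (S \<inter> C) = 2)" for m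
    proof (induction m rule: less_induct)
      case (less m)
      show ?case
      proof (intro allI impI)
        fix S assume S: "is_root n k a \<alpha> S \<and> card (S \<inter> C) = m \<and> 2 \<le> m"
        show "\<exists>S. is_root n k a \<alpha> S \<and> card (S \<inter> C) = 2"
        proof (cases "m = 2")
          case True thus ?thesis using S by blast
        next
          case False
          hence m3: "3 \<le> m" "m - 1 < m" "2 \<le> m - 1" using S by auto
          have "3 \<le> card (S \<inter> C)" using S m3 by simp
          then obtain S' where S': "is_root n k a \<alpha> S'" "card (S' \<inter> C) = m - 1"
            using step[of S] S by blast
          have "\<forall>S. is_root n k a \<alpha> S \<and> card (S \<inter> C) = m - 1 \<and> 2 \<le> m - 1 \<longrightarrow>
            (\<exists>S. is_root n k a \<alpha> S \<and> card (S \<inter> C) = 2)" by (rule less.IH[OF m3(2)])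
          thus ?thesis using S' m3 by blast
        qed
      qed
    qed
    thus ?thesis using start unfolding C_def by blast
  qed
  have part2: "\<forall>i\<in>W. \<forall>S. is_root n k a \<alpha> S \<and> i \<in> S \<longrightarrow>
            (\<forall>j. j \<noteq> i \<and> j \<in> S \<inter> Cset n k ((i - k + 1) mod n) \<longrightarrow> cint n i ((j + k) mod n) \<subseteq> W) \<and>
            (\<forall>j. j \<noteq> i \<and> j \<in> S \<inter> Cset n k i \<longrightarrow> cint n ((j - k) mod n) i \<subseteq> W)"
  proof (intro ballI allI impI conjI)
    fix i S assume iW: "i \<in> W" and SS: "is_root n k a \<alpha> S \<and> i \<in> S"
    have S: "is_root n k a \<alpha> S" and iS: "i \<in> S" using SS by auto
    have iZ: "i \<in> Zn n" using iW unfolding W_def by simp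
    {
      fix j assume jj: "j \<noteq> i \<and> j \<in> S \<inter> Cset n k ((i - k + 1) mod n)"
      define M where "M = (i - k + 1) mod n"
      define d where "d = (j - M) mod n"
      have jZ: "j \<in> Zn n" and dk: "d < k" using jj n unfolding d_def M_def by (auto simp: Cset_mem)
      have d0: "0 \<le> d" unfolding d_def using n(1) by (rule pos_mod_sign)
      define e where "e = k - 1 - d"
      have dv1: "n dvd (j - M) - d" unfolding d_def by (rule mdvd)
      have dv2: "n dvd (i - k + 1) - M" unfolding M_def by (rule mdvd)
      have "n dvd (i - j) - e"
        by (rule dvd3[OF dv1 dv2 dvd_0_right, where p="-1" and q=1 and r=0]) (simp add: e_def algebra_simps)
      hence eq: "(i - j) mod n = e" by (intro mod_eqI'[OF n(1)]) (use dk d0 n in \<open>simp_all add: e_def\<close>)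
      have e1: "1 \<le> e"
      proof (rule ccontr)
        assume "\<not> 1 \<le> e"
        hence "e = 0" using dk unfolding e_def by simp
        hence "(i - j) mod n = (j - j) mod n" using eq by simp
        thus False using mod_inj_Zn[OF iZ jZ] jj by blast
      qed
      have dve: "n dvd (i - j) - e" using eq mdvd by metis
      have dvjk: "n dvd (j + k) - (j + k) mod n" by (rule mdvd)
      have "n dvd ((j + k) mod n - i) - (k - e)"
        by (rule dvd3[OF dvjk dve dvd_0_right, where p="-1" and q="-1" and r=0]) (simp add: algebra_simps)
      hence bnd: "((j + k) mod n - i) mod n = k - e"
        by (intro mod_eqI'[OF n(1)]) (use e1 dk d0 n in \<open>simp_all add: e_def\<close>)
      show "cint n i ((j + k) mod n) \<subseteq> W"
      proof
        fix x assume "x \<in> cint n i ((j + k) mod n)"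
        then obtain t where t: "x = (i + t) mod n" "0 \<le> t" "t \<le> k - e"
          unfolding cint_def bnd by blast
        have xZ: "x \<in> Zn n" using t n by (simp add: Zn_def)
        have dvx: "n dvd (i + t) - x" unfolding t(1) by (rule mdvd)
        show "x \<in> W"
        proof (rule key[OF S iS iW xZ], rule swap_cover[OF n(1,2) rootZ(3)[OF S] iS xZ], intro allI impI)
          fix s assume us: "(i - s) mod n < k"
          define u where "u = (i - s) mod n"
          have u0: "0 \<le> u" unfolding u_def using n(1) by (rule pos_mod_sign)
          have dvu: "n dvd (i - s) - u" unfolding u_def by (rule mdvd)
          show "(\<exists>q\<in>S. q \<noteq> i \<and> (q - s) mod n < k) \<or> (x - s) mod n < k"
          proof (cases "e \<le> u")
            case True
            have "n dvd (j - s) - (u - e)"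
              by (rule dvd3[OF dvu dve dvd_0_right, where p=1 and q="-1" and r=0]) (simp add: algebra_simps)
            hence "(j - s) mod n = u - e"
              by (intro mod_eqI'[OF n(1)]) (use True us e1 n in \<open>simp_all add: u_def\<close>)
            hence "(j - s) mod n < k" using us e1 unfolding u_def by simp
            thus ?thesis using jj by blast
          next
            case False
            have "n dvd (x - s) - (u + t)"
              by (rule dvd3[OF dvx dvu dvd_0_right, where p="-1" and q=1 and r=0]) (simp add: algebra_simps)
            hence "(x - s) mod n = u + t"
              by (intro mod_eqI'[OF n(1)]) (use False t u0 n in \<open>simp_all\<close>)
            thus ?thesis using False t by simp
          qed
        qed
      qed
    }
    {
      fix j assume jj: "j \<noteq> i \<and> j \<in> S \<inter> Cset n k i"
      define e where "e = (j - i) mod n"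
      have jZ: "j \<in> Zn n" and ek: "e < k" using jj n unfolding e_def by (auto simp: Cset_mem)
      have e0: "0 \<le> e" unfolding e_def using n(1) by (rule pos_mod_sign)
      have e1: "1 \<le> e"
      proof (rule ccontr)
        assume "\<not> 1 \<le> e"
        hence "(j - i) mod n = (i - i) mod n" using e0 unfolding e_def by simp
        thus False using mod_inj_Zn[OF jZ iZ] jj by blast
      qed
      define M where "M = (j - k) mod n"
      have dve: "n dvd (j - i) - e" unfolding e_def by (rule mdvd)
      have dvM: "n dvd (j - k) - M" unfolding M_def by (rule mdvd)
      have "n dvd (i - M) - (k - e)"
        by (rule dvd3[OF dvM dve dvd_0_right, where p=1 and q="-1" and r=0]) (simp add: algebra_simps)
      hence bnd: "(i - M) mod n = k - e"
        by (intro mod_eqI'[OF n(1)]) (use e1 ek n in \<open>simp_all\<close>)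
      show "cint n ((j - k) mod n) i \<subseteq> W"
      proof
        fix x assume "x \<in> cint n ((j - k) mod n) i"
        then obtain t where t: "x = (M + t) mod n" "0 \<le> t" "t \<le> k - e"
          unfolding cint_def M_def[symmetric] bnd by blast
        have xZ: "x \<in> Zn n" using t n by (simp add: Zn_def)
        have dvx: "n dvd (M + t) - x" unfolding t(1) by (rule mdvd)
        show "x \<in> W"
        proof (rule key[OF S iS iW xZ], rule swap_cover[OF n(1,2) rootZ(3)[OF S] iS xZ], intro allI impI)
          fix s assume us: "(i - s) mod n < k"
          define u where "u = (i - s) mod n"
          have u0: "0 \<le> u" unfolding u_def using n(1) by (rule pos_mod_sign)
          have dvu: "n dvd (i - s) - u" unfolding u_def by (rule mdvd)
          show "(\<exists>q\<in>S. q \<noteq> i \<and> (q - s) mod n < k) \<or> (x - s) mod n < k"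
          proof (cases "u + e < k")
            case True
            have "n dvd (j - s) - (u + e)"
              by (rule dvd3[OF dvu dve dvd_0_right, where p=1 and q=1 and r=0]) (simp add: algebra_simps)
            hence "(j - s) mod n = u + e"
              by (intro mod_eqI'[OF n(1)]) (use True u0 e0 n in \<open>simp_all\<close>)
            hence "(j - s) mod n < k" using True by simp
            thus ?thesis using jj by blast
          next
            case False
            have "n dvd (x - s) - (u + e - k + t)"
              by (rule dvd4[OF dvx dvM dvu dve, where p="-1" and q="-1" and r=1 and s=1]) (simp add: algebra_simps)
            hence "(x - s) mod n = u + e - k + t"
              by (intro mod_eqI'[OF n(1)]) (use False t us n in \<open>simp_all add: u_def\<close>)
            thus ?thesis using False t us unfolding u_def by simp
          qed
        qed
      qed
    }
  qed
  show ?thesis using ex_in ex_out ex2 part2 by blast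
qed

end
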